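(* Let $k\ge2$ be an integer. For every integer $n>k-1$, $$D_k(n)+D_{k-1}(n)=D_{k-1}(n-k+1)+2A(n).$$
   Context: $A(n)$ is the number of partitions of $n$ into distinct parts. For $j\ge1$, $D_j(n)$ is the number of partitions of $n$ into non-negative parts (the part $0$ is allowed) in which the smallest part appears exactly $j$ times and no other part is repeated, with $D_j(0)=1$. *)

theory Defs
  imports Main "HOL-Library.Multiset"
begin

definition A :: "nat \<Rightarrow> nat" where
  "A n = card {M :: nat multiset. (\<forall>x\<in>#M. x > 0) \<and> sum_mset M = n \<and> (\<forall>x. count M x \<le> 1)}"

text \<open>Partitions into non-negative parts (0 allowed), smallest part occurring exactly j times,
  every other part occurring at most once; D j 0 = 1 by convention.\<close>

definition D :: "nat \<Rightarrow> nat \<Rightarrow> nat" where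
  "D j n = (if n = 0 then 1 else
     card {M :: nat multiset. M \<noteq> {#} \<and> sum_mset M = n \<and>
        count M (Min (set_mset M)) = j \<and>
        (\<forall>x\<in>#M. x \<noteq> Min (set_mset M) \<longrightarrow> count M x \<le> 1)})"

end

theory Submission
  imports Defs
begin

definition Q :: "nat \<Rightarrow> nat \<Rightarrow> nat multiset \<Rightarrow> bool" where
  "Q j s M \<longleftrightarrow> count M s = j \<and> (\<forall>x<s. count M x = 0) \<and> (\<forall>x>s. count M x \<le> 1)"

definition PP :: "nat \<Rightarrow> nat \<Rightarrow> nat multiset set" where
  "PP j n = {M :: nat multiset. M \<noteq> {#} \<and> sum_mset M = n \<and>
        count M (Min (set_mset M)) = j \<and>
        (\<forall>x\<in>#M. x \<noteq> Min (set_mset M) \<longrightarrow> count M x \<le> 1)}"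

definition Z :: "nat \<Rightarrow> nat \<Rightarrow> nat multiset set" where
  "Z j n = {M. Q j 0 M \<and> sum_mset M = n}"

definition Pp :: "nat \<Rightarrow> nat \<Rightarrow> nat multiset set" where
  "Pp j n = {M. \<exists>s\<ge>1. Q j s M \<and> sum_mset M = n}"

definition Dist :: "nat \<Rightarrow> nat multiset set" where
  "Dist n = {M :: nat multiset. (\<forall>x\<in>#M. x > 0) \<and> sum_mset M = n \<and> (\<forall>x. count M x \<le> 1)}"

lemma D_eq: "n > 0 \<Longrightarrow> D j n = card (PP j n)"
  by (simp add: D_def PP_def)

lemma Q_min:
  assumes "Q j s M" "j \<ge> 1"
  shows "Min (set_mset M) = s"
proof (rule Min_eqI)
  show "finite (set_mset M)" by simp
  have "count M s > 0" using assms unfolding Q_def by simp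
  then show "s \<in># M" by (simp add: not_in_iff[symmetric])
  fix x assume "x \<in># M"
  then have "count M x > 0" by simp
  then show "s \<le> x" using assms unfolding Q_def by (metis leI less_irrefl)
qed

lemma PP_char:
  assumes "j \<ge> 1"
  shows "M \<in> PP j n \<longleftrightarrow> (\<exists>s. Q j s M) \<and> sum_mset M = n"
proof
  assume M: "M \<in> PP j n"
  let ?s = "Min (set_mset M)"
  have ne: "M \<noteq> {#}" using M by (simp add: PP_def)
  have le: "\<And>x. x \<in># M \<Longrightarrow> ?s \<le> x" by simp
  have "Q j ?s M" unfolding Q_def
  proof (intro conjI allI impI)
    show "count M ?s = j" using M by (simp add: PP_def)
    fix x
    show "x < ?s \<Longrightarrow> count M x = 0" using le by (meson count_inI leD)
    show "?s < x \<Longrightarrow> count M x \<le> 1" using M unfolding PP_def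
      by (metis (mono_tags, lifting) count_inI less_irrefl mem_Collect_eq zero_le)
  qed
  then show "(\<exists>s. Q j s M) \<and> sum_mset M = n" using M by (auto simp: PP_def)
next
  assume "(\<exists>s. Q j s M) \<and> sum_mset M = n"
  then obtain s where q: "Q j s M" and sm: "sum_mset M = n" by blast
  have mn: "Min (set_mset M) = s" using Q_min[OF q assms] .
  have ne: "M \<noteq> {#}" using q assms unfolding Q_def by auto
  have "\<forall>x\<in>#M. x \<noteq> s \<longrightarrow> count M x \<le> 1"
  proof (intro ballI impI)
    fix x assume x: "x \<in># M" "x \<noteq> s"
    have "s \<le> x" using x mn by (metis Min_le finite_set_mset)
    then show "count M x \<le> 1" using q x unfolding Q_def by auto
  qed
  then show "M \<in> PP j n" using q sm mn ne unfolding PP_def Q_def by auto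
qed

lemma size_le: "size M \<le> count M 0 + sum_mset (M :: nat multiset)"
  by (induction M) auto

lemma in_le_sum: "x \<in># M \<Longrightarrow> x \<le> sum_mset (M::nat multiset)"
  by (metis sum_mset.remove le_add1)

lemma fin_PP: "finite (PP j n)"
proof -
  have "PP j n \<subseteq> (\<Union>i\<in>{..j+n}. multisets_of_size {..n} i)"
  proof
    fix M assume M: "M \<in> PP j n"
    have c0: "count M 0 \<le> j"
    proof (cases "0 \<in># M")
      case True
      then have "Min (set_mset M) = 0" by (meson Min_le finite_set_mset le_zero_eq)
      then show ?thesis using M by (simp add: PP_def)
    next
      case False then show ?thesis by (simp add: not_in_iff)
    qed
    have "size M \<le> j + n" using size_le[of M] c0 M by (simp add: PP_def)
    moreover have "set_mset M \<subseteq> {..n}" using M in_le_sum by (auto simp: PP_def)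
    ultimately show "M \<in> (\<Union>i\<in>{..j+n}. multisets_of_size {..n} i)"
      by (auto simp: multisets_of_size_def)
  qed
  moreover have "finite (\<Union>i\<in>{..j+n}. multisets_of_size {..n} i)" by auto
  ultimately show ?thesis by (rule finite_subset)
qed

lemma A_eq: "A n = card (Dist n)"
  by (simp add: A_def Dist_def)

lemma card_Z:
  assumes "j \<ge> 1"
  shows "card (Z j n) = A n"
proof -
  let ?h = "\<lambda>\<mu>. \<mu> + replicate_mset j (0::nat)"
  have inj: "inj_on ?h (Dist n)" by (rule inj_onI) simp
  have "?h ` Dist n = Z j n"
  proof
    show "?h ` Dist n \<subseteq> Z j n"
    proof
      fix M assume "M \<in> ?h ` Dist n"
      then obtain \<mu> where mu: "\<mu> \<in> Dist n" and M: "M = ?h \<mu>" by blast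
      have "count \<mu> 0 = 0" using mu unfolding Dist_def by (auto simp: count_eq_zero_iff)
      then show "M \<in> Z j n" using mu unfolding M Z_def Q_def Dist_def by auto
    qed
    show "Z j n \<subseteq> ?h ` Dist n"
    proof
      fix M assume M: "M \<in> Z j n"
      let ?\<mu> = "filter_mset (\<lambda>x. x > 0) M"
      have eq: "M = ?h ?\<mu>" using M unfolding Z_def Q_def
        by (auto simp: multiset_eq_iff)
      have "sum_mset M = sum_mset ?\<mu>" by (subst eq) simp
      then have "?\<mu> \<in> Dist n" using M unfolding Z_def Q_def Dist_def by auto
      then show "M \<in> ?h ` Dist n" using eq by blast
    qed
  qed
  then show ?thesis using card_image[OF inj] A_eq by simp
qed

lemma PP_split:
  assumes "j \<ge> 1"
  shows "PP j n = Z j n \<union> Pp j n" and "Z j n \<inter> Pp j n = {}"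
proof -
  show "PP j n = Z j n \<union> Pp j n"
    using PP_char[OF assms] unfolding Z_def Pp_def
    by auto (metis One_nat_def not_less_eq_eq le0 le_antisym)
  show "Z j n \<inter> Pp j n = {}"
    using assms unfolding Z_def Pp_def Q_def by auto
qed

lemma card_PP:
  assumes "j \<ge> 1"
  shows "card (PP j n) = A n + card (Pp j n)"
proof -
  have f: "finite (Z j n)" "finite (Pp j n)"
    using fin_PP[of j n] PP_split(1)[OF assms] by (metis finite_Un)+
  show ?thesis using card_Un_disjoint[OF f PP_split(2)[OF assms]] PP_split(1)[OF assms] card_Z[OF assms]
    by simp
qed

lemma Q_decomp:
  assumes "Q c t M" "c \<ge> r"
  obtains R where "M = R + replicate_mset r t"
proof -
  have "replicate_mset r t \<subseteq># M" using assms unfolding Q_def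
    by (auto simp: subseteq_mset_def count_replicate_mset)
  then have "M = (M - replicate_mset r t) + replicate_mset r t" by simp
  then show ?thesis using that by blast
qed

lemma bij_part:
  assumes k: "k \<ge> 2" and n: "n = m + (k - 1)"
  shows "card (PP (k - 1) m) = card (Pp k n \<union> Pp (k - 1) n)"
proof -
  define F :: "nat multiset \<Rightarrow> nat multiset" where "F M = M - replicate_mset (k-1) (Min (set_mset M)) + replicate_mset (k-1) (Min (set_mset M) + 1)" for M
  define G :: "nat multiset \<Rightarrow> nat multiset" where "G M = M - replicate_mset (k-1) (Min (set_mset M)) + replicate_mset (k-1) (Min (set_mset M) - 1)" for M
  have k1: "k - 1 \<ge> 1" using k by simp
  have FA: "F M \<in> Pp k n \<union> Pp (k - 1) n \<and> G (F M) = M" if M: "M \<in> PP (k-1) m" for M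
  proof -
    obtain s where q: "Q (k-1) s M" and sm: "sum_mset M = m" using M PP_char[OF k1] by blast
    have mn: "Min (set_mset M) = s" using Q_min[OF q k1] .
    obtain R where R: "M = R + replicate_mset (k-1) s" using Q_decomp[OF q, of "k-1"] by auto
    have FM: "F M = R + replicate_mset (k-1) (s+1)" unfolding F_def mn by (simp add: R)
    have cR: "count R x = count M x - (if x = s then k - 1 else 0)" for x
      by (simp add: R)
    define c where "c = k - 1 + count M (s+1)"
    have "count M (s+1) \<le> 1" using q unfolding Q_def by simp
    then have c: "c = k - 1 \<or> c = k" using k unfolding c_def by linarith
    have qF: "Q c (s+1) (F M)" unfolding Q_def FM
    proof (intro conjI allI impI)
      show "count (R + replicate_mset (k - 1) (s + 1)) (s + 1) = c"
        using cR[of "s+1"] by (simp add: c_def)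
      fix x
      show "x < s + 1 \<Longrightarrow> count (R + replicate_mset (k - 1) (s + 1)) x = 0"
        using cR[of x] q unfolding Q_def by auto
      show "s + 1 < x \<Longrightarrow> count (R + replicate_mset (k - 1) (s + 1)) x \<le> 1"
        using cR[of x] q unfolding Q_def by auto
    qed
    have e1: "sum_mset (F M) = sum_mset R + (k-1)*(s+1)" unfolding FM by simp
    have e2: "m = sum_mset R + (k-1)*s" using sm unfolding R by simp
    have "sum_mset (F M) = n" unfolding e1 n e2 by (simp only: distrib_left mult_1_right add.assoc)
    then have "F M \<in> Pp k n \<union> Pp (k - 1) n" using qF c unfolding Pp_def by auto
    moreover have "Min (set_mset (F M)) = s + 1" using Q_min[OF qF] c k by auto
    then have "G (F M) = R + replicate_mset (k-1) s" unfolding G_def using FM by simp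
    then have "G (F M) = M" using R by simp
    ultimately show ?thesis by blast
  qed
  have GA: "G M \<in> PP (k-1) m \<and> F (G M) = M" if M: "M \<in> Pp k n \<union> Pp (k - 1) n" for M
  proof -
    obtain c t where q: "Q c t M" and t: "t \<ge> 1" and c: "c = k \<or> c = k - 1" and sm: "sum_mset M = n"
      using M unfolding Pp_def by blast
    have c1: "c \<ge> 1" "c \<ge> k - 1" using c k by auto
    have mn: "Min (set_mset M) = t" using Q_min[OF q c1(1)] .
    obtain R where R: "M = R + replicate_mset (k-1) t" using Q_decomp[OF q c1(2)] by auto
    have GM: "G M = R + replicate_mset (k-1) (t-1)" unfolding G_def mn by (simp add: R)
    have cR: "count R x = count M x - (if x = t then k - 1 else 0)" for x
      by (simp add: R)
    have qG: "Q (k-1) (t-1) (G M)" unfolding Q_def GM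
    proof (intro conjI allI impI)
      show "count (R + replicate_mset (k - 1) (t - 1)) (t - 1) = k - 1"
        using cR[of "t-1"] q t unfolding Q_def by auto
      fix x
      show "x < t - 1 \<Longrightarrow> count (R + replicate_mset (k - 1) (t - 1)) x = 0"
        using cR[of x] q unfolding Q_def by auto
      show "t - 1 < x \<Longrightarrow> count (R + replicate_mset (k - 1) (t - 1)) x \<le> 1"
        using cR[of x] q c unfolding Q_def by auto
    qed
    have "(k - 1) * t = (k - 1) * (t - 1) + (k - 1)" using t
      by (metis add.commute mult.commute mult_Suc Suc_diff_1 less_le_trans zero_less_one)
    moreover have "sum_mset (G M) = sum_mset R + (k-1)*(t-1)" unfolding GM by simp
    moreover have "n = sum_mset R + (k-1)*t" using sm unfolding R by simp
    ultimately have "sum_mset (G M) = m" using n by linarith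
    then have "G M \<in> PP (k-1) m" using qG PP_char[OF k1] by blast
    moreover have "Min (set_mset (G M)) = t - 1" using Q_min[OF qG k1] .
    then have "F (G M) = R + replicate_mset (k-1) t" unfolding F_def using t GM by simp
    then have "F (G M) = M" using R by simp
    ultimately show ?thesis by blast
  qed
  have "bij_betw F (PP (k-1) m) (Pp k n \<union> Pp (k - 1) n)"
    by (rule bij_betw_byWitness[where f'=G]) (use FA GA in auto)
  then show ?thesis by (rule bij_betw_same_card)
qed

theorem theorem12:
  fixes k n :: nat
  assumes "k \<ge> 2" and "n > k - 1"
  shows "D k n + D (k - 1) n = D (k - 1) (n - k + 1) + 2 * A n"
proof -
  define m where "m = n - k + 1"
  have m: "m > 0" "n = m + (k - 1)" using assms unfolding m_def by auto
  have k1: "k - 1 \<ge> 1" "k \<ge> 1" using assms by auto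
  have n0: "n > 0" using assms by auto
  have fk: "finite (Pp k n)" "finite (Pp (k-1) n)"
    using fin_PP PP_split(1) k1 by (metis finite_Un)+
  have dj: "Pp k n \<inter> Pp (k-1) n = {}"
  proof (rule ccontr)
    assume "Pp k n \<inter> Pp (k-1) n \<noteq> {}"
    then obtain M s s' where "Q k s M" "Q (k-1) s' M" unfolding Pp_def by blast
    then show False using Q_min k1 assms unfolding Q_def by (metis diff_less lessI less_irrefl zero_less_one less_le_trans)
  qed
  have "D (k - 1) (n - k + 1) = card (Pp k n) + card (Pp (k-1) n)"
    using D_eq[OF m(1)] bij_part[OF assms(1) m(2)] card_Un_disjoint[OF fk dj] m_def by simp
  moreover have "D k n = A n + card (Pp k n)" using D_eq[OF n0] card_PP k1 by simp
  moreover have "D (k-1) n = A n + card (Pp (k-1) n)" using D_eq[OF n0] card_PP k1 by simp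
  ultimately show ?thesis by simp
qed

end
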